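(* Let $p,q$ be positive integers and let $\Phi:U_{pq}(\mathbb{C})\to\mathbb{C}^{q\times p}$ be given by $\Phi\binom{Z_0}{Z_1}=Z_1Z_0^{-1}$, where $Z_0\in\mathbb{C}^{p\times p}$, $Z_1\in\mathbb{C}^{q\times p}$. Then the complex valued components of $\Phi$ form an orthogonal harmonic family of $\mathbf{GL}_p(\mathbb{C})$-invariant functions on $U_{pq}(\mathbb{C})$, equipped with the semi-Euclidean metric.
   Context: $U_{pq}(\mathbb{C})=\{\binom{Z_0}{Z_1}\in\mathbb{C}^{(p+q)\times p}: -Z_0^*Z_0+Z_1^*Z_1<0\}$ (negative definite), on which $Z_0$ is invertible; $\mathbf{GL}_p(\mathbb{C})$ acts by right multiplication. The semi-Euclidean metric is $(X,Y)=\mathfrak{Re}\,\mathrm{trace}(X^*\mathrm{diag}(-I_p,I_q)Y)$. For a semi-Riemannian manifold $(M,g)$ and complex functions $\phi,\psi$, let $\tau(\phi)$ be the (complex-linear) Laplace–Beltrami operator and $\kappa(\phi,\psi)=g(\mathrm{grad}\,\phi,\mathrm{grad}\,\psi)$ with $g$ extended complex-bilinearly. Explicitly here, with entries $z_{kl}$: $\tau(\phi)=-4\sum_{k,l=1}^p\frac{\partial^2\phi}{\partial z_{kl}\partial\bar z_{kl}}+4\sum_{k=p+1}^{p+q}\sum_{l=1}^p\frac{\partial^2\phi}{\partial z_{kl}\partial\bar z_{kl}}$ and $\kappa(\phi,\psi)=-2\sum_{k,l=1}^p(\frac{\partial\phi}{\partial z_{kl}}\frac{\partial\psi}{\partial\bar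 z_{kl}}+\frac{\partial\phi}{\partial\bar z_{kl}}\frac{\partial\psi}{\partial z_{kl}})+2\sum_{k=p+1}^{p+q}\sum_{l=1}^p(\frac{\partial\phi}{\partial z_{kl}}\frac{\partial\psi}{\partial\bar z_{kl}}+\frac{\partial\phi}{\partial\bar z_{kl}}\frac{\partial\psi}{\partial z_{kl}})$. A set $\Omega$ of complex functions on $M$ is an orthogonal harmonic family if $\tau(\phi)=0$ and $\kappa(\phi,\psi)=0$ for all $\phi,\psi\in\Omega$. *)

theory Defs
  imports "HOL-Analysis.Analysis"
begin

text \<open>A point of \<open>\<complex>^((p+q)\<times>p)\<close> is a matrix \<open>Z :: complex^'p^('p+'q)\<close>;
  rows \<open>Inl k\<close> (k = 1..p) form the block Z0, rows \<open>Inr k\<close> (k = p+1..p+q) form Z1.\<close>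

definition cadj :: "complex^'n^'m \<Rightarrow> complex^'m^'n" where
  "cadj A = (\<chi> i j. cnj (A $ j $ i))"

definition upper_block :: "complex^'p^('p::finite + 'q::finite) \<Rightarrow> complex^'p^'p" where
  "upper_block Z = (\<chi> i j. Z $ Inl i $ j)"

definition lower_block :: "complex^'p^('p::finite + 'q::finite) \<Rightarrow> complex^'p^'q" where
  "lower_block Z = (\<chi> i j. Z $ Inr i $ j)"

definition neg_definite :: "complex^'n^'n \<Rightarrow> bool" where
  "neg_definite M \<longleftrightarrow> (\<forall>v::complex^'n. v \<noteq> 0 \<longrightarrow>
      (\<Sum>i\<in>UNIV. cnj (v $ i) * (M *v v) $ i) \<in> \<real> \<and>
      Re (\<Sum>i\<in>UNIV. cnj (v $ i) * (M *v v) $ i) < 0)"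

definition U_pq :: "(complex^'p^('p::finite + 'q::finite)) set" where
  "U_pq = {Z. neg_definite (- (cadj (upper_block Z) ** upper_block Z)
                             + cadj (lower_block Z) ** lower_block Z)}"

definition Phi :: "complex^'p^('p::finite + 'q::finite) \<Rightarrow> complex^'p^'q" where
  "Phi Z = lower_block Z ** matrix_inv (upper_block Z)"

definition dirE :: "'r \<Rightarrow> 'c \<Rightarrow> complex \<Rightarrow> complex^'c^'r" where
  "dirE k l c = (\<chi> i j. if i = k \<and> j = l then c else 0)"

definition pd_re :: "(complex^'c^'r \<Rightarrow> complex) \<Rightarrow> 'r \<Rightarrow> 'c \<Rightarrow> complex^'c^'r \<Rightarrow> complex" where
  "pd_re f k l Z = vector_derivative (\<lambda>t::real. f (Z + dirE k l (complex_of_real t))) (at 0)"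

definition pd_im :: "(complex^'c^'r \<Rightarrow> complex) \<Rightarrow> 'r \<Rightarrow> 'c \<Rightarrow> complex^'c^'r \<Rightarrow> complex" where
  "pd_im f k l Z = vector_derivative (\<lambda>t::real. f (Z + dirE k l (\<i> * complex_of_real t))) (at 0)"

definition wz :: "(complex^'c^'r \<Rightarrow> complex) \<Rightarrow> 'r \<Rightarrow> 'c \<Rightarrow> complex^'c^'r \<Rightarrow> complex" where
  "wz f k l Z = (pd_re f k l Z - \<i> * pd_im f k l Z) / 2"

definition wzbar :: "(complex^'c^'r \<Rightarrow> complex) \<Rightarrow> 'r \<Rightarrow> 'c \<Rightarrow> complex^'c^'r \<Rightarrow> complex" where
  "wzbar f k l Z = (pd_re f k l Z + \<i> * pd_im f k l Z) / 2"

text \<open>Sign of the metric diag(-I_p, I_q) on row k.\<close>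
fun row_sign :: "'p::finite + 'q::finite \<Rightarrow> complex" where
  "row_sign (Inl _) = -1"
| "row_sign (Inr _) = 1"

definition tension :: "(complex^'p^('p::finite + 'q::finite) \<Rightarrow> complex) \<Rightarrow> complex^'p^('p::finite + 'q::finite) \<Rightarrow> complex" where
  "tension f Z = (\<Sum>k\<in>UNIV. \<Sum>l\<in>UNIV. 4 * row_sign k * wz (wzbar f k l) k l Z)"

definition conformality ::
  "(complex^'p^('p::finite + 'q::finite) \<Rightarrow> complex) \<Rightarrow> (complex^'p^('p::finite + 'q::finite) \<Rightarrow> complex) \<Rightarrow> complex^'p^('p::finite + 'q::finite) \<Rightarrow> complex" where
  "conformality f g Z = (\<Sum>k\<in>UNIV. \<Sum>l\<in>UNIV.
      2 * row_sign k * (wz f k l Z * wzbar g k l Z + wzbar f k l Z * wz g k l Z))"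

definition orthogonal_harmonic_family ::
  "(complex^'p^('p::finite + 'q::finite)) set \<Rightarrow> (complex^'p^('p::finite + 'q::finite) \<Rightarrow> complex) set \<Rightarrow> bool" where
  "orthogonal_harmonic_family M \<Omega> \<longleftrightarrow>
     (\<forall>\<phi>\<in>\<Omega>. \<forall>Z\<in>M. tension \<phi> Z = 0) \<and>
     (\<forall>\<phi>\<in>\<Omega>. \<forall>\<psi>\<in>\<Omega>. \<forall>Z\<in>M. conformality \<phi> \<psi> Z = 0)"

end

theory Submission
  imports Defs
begin


lemma matrix_inv_eq:
  fixes A X :: "complex^'n^'n"
  assumes "A ** X = mat 1"
  shows "matrix_inv A = X"
proof -
  have XA: "X ** A = mat 1" using assms matrix_left_right_inverse by blast
  have "A ** matrix_inv A = mat 1 \<and> matrix_inv A ** A = mat 1"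
    unfolding matrix_inv_def by (rule someI[of _ X]) (use assms XA in auto)
  then have "matrix_inv A = (X ** A) ** matrix_inv A" by (simp add: XA)
  also have "\<dots> = X" using \<open>A ** matrix_inv A = mat 1 \<and> _\<close> by (simp add: matrix_mul_assoc[symmetric])
  finally show ?thesis .
qed

lemma inv_mat_inv:
  fixes A :: "complex^'n^'n"
  assumes "invertible A"
  shows "A ** matrix_inv A = mat 1"
  using assms unfolding invertible_def matrix_inv_def by (rule someI_ex[THEN conjunct1])

lemma sm:
  fixes A :: "complex^'n^'n"
  assumes "invertible A" and nz: "1 + c * matrix_inv A $ l $ k \<noteq> 0"
  shows "(A + (\<chi> i j. if i = k \<and> j = l then c else 0)) **
     (matrix_inv A - (\<chi> i j. (c / (1 + c * matrix_inv A $ l $ k)) * matrix_inv A $ i $ k * matrix_inv A $ l $ j)) = mat 1"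
proof -
  define B where "B = matrix_inv A"
  define \<gamma> where "\<gamma> = c / (1 + c * B $ l $ k)"
  have AB: "\<And>i j. (\<Sum>m\<in>UNIV. A $ i $ m * B $ m $ j) = (if i = j then 1 else 0)"
    using inv_mat_inv[OF assms(1)] unfolding B_def
    by (auto simp: vec_eq_iff matrix_matrix_mult_def mat_def)
  have g: "c - \<gamma> - c * \<gamma> * B $ l $ k = 0"
    using nz unfolding \<gamma>_def B_def[symmetric] by (simp add: field_simps)
  have main: "\<And>i j. (\<Sum>m\<in>UNIV. (A $ i $ m + (if i = k \<and> m = l then c else 0)) * (B $ m $ j - \<gamma> * B $ m $ k * B $ l $ j)) = (if i = j then 1 else 0)"
  proof -
    fix i j
    have e1: "(\<Sum>m\<in>UNIV. (A $ i $ m + (if i = k \<and> m = l then c else 0)) * (B $ m $ j - \<gamma> * B $ m $ k * B $ l $ j))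
      = (\<Sum>m\<in>UNIV. A $ i $ m * B $ m $ j) - \<gamma> * B $ l $ j * (\<Sum>m\<in>UNIV. A $ i $ m * B $ m $ k)
        + (\<Sum>m\<in>UNIV. (if i = k \<and> m = l then c else 0) * (B $ m $ j - \<gamma> * B $ m $ k * B $ l $ j))" (is "_ = ?rhs")
    proof -
      have "(\<Sum>m\<in>UNIV. (A $ i $ m + (if i = k \<and> m = l then c else 0)) * (B $ m $ j - \<gamma> * B $ m $ k * B $ l $ j))
        = (\<Sum>m\<in>UNIV. A $ i $ m * B $ m $ j - \<gamma> * B $ l $ j * (A $ i $ m * B $ m $ k)
             + (if i = k \<and> m = l then c else 0) * (B $ m $ j - \<gamma> * B $ m $ k * B $ l $ j))"
        by (rule sum.cong) (simp_all add: algebra_simps)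
      also have "\<dots> = ?rhs"
        by (simp only: sum.distrib sum_subtractf sum_distrib_left[symmetric])
      finally show ?thesis .
    qed
    have e2: "(\<Sum>m\<in>UNIV. (if i = k \<and> m = l then c else 0) * (B $ m $ j - \<gamma> * B $ m $ k * B $ l $ j))
        = (if i = k then c * (B $ l $ j - \<gamma> * B $ l $ k * B $ l $ j) else 0)"
    proof -
      have ifm: "\<And>P x. (if P then c else 0) * x = (if P then c * x else 0)" by simp
      show ?thesis by (cases "i = k") (simp_all only: ifm, simp_all)
    qed
    have "(\<Sum>m\<in>UNIV. (A $ i $ m + (if i = k \<and> m = l then c else 0)) * (B $ m $ j - \<gamma> * B $ m $ k * B $ l $ j))
      = (\<Sum>m\<in>UNIV. A $ i $ m * B $ m $ j) - \<gamma> * B $ l $ j * (\<Sum>m\<in>UNIV. A $ i $ m * B $ m $ k)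
        + (if i = k then c * (B $ l $ j - \<gamma> * B $ l $ k * B $ l $ j) else 0)"
      using e1 e2 by simp
    also have "\<dots> = (if i = j then 1 else 0)"
    proof -
      have g2: "c * B $ l $ j = \<gamma> * B $ l $ j + \<gamma> * (c * (B $ l $ j * B $ l $ k))"
        using arg_cong[OF g, of "\<lambda>x. x * B $ l $ j"] by (simp add: algebra_simps)
      show ?thesis unfolding AB using g2 by (auto simp: algebra_simps)
    qed
    finally show "(\<Sum>m\<in>UNIV. (A $ i $ m + (if i = k \<and> m = l then c else 0)) * (B $ m $ j - \<gamma> * B $ m $ k * B $ l $ j)) = (if i = j then 1 else 0)" .
  qed
  show ?thesis
    unfolding B_def[symmetric] \<gamma>_def[symmetric]
    using main by (simp add: vec_eq_iff matrix_matrix_mult_def mat_def)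
qed
definition Em :: "'r \<Rightarrow> 'c \<Rightarrow> complex \<Rightarrow> complex^'c^'r" where
  "Em k l c = (\<chi> i j. if i = k \<and> j = l then c else 0)"

lemma blocks_Inl:
  "upper_block (Z + dirE (Inl k) l c) = upper_block Z + Em k l c"
  "lower_block (Z + dirE (Inl k) l c) = lower_block Z"
  by (auto simp: vec_eq_iff upper_block_def lower_block_def dirE_def Em_def)

lemma blocks_Inr:
  "upper_block (Z + dirE (Inr k) l c) = upper_block Z"
  "lower_block (Z + dirE (Inr k) l c) = lower_block Z + Em k l c"
  by (auto simp: vec_eq_iff upper_block_def lower_block_def dirE_def Em_def)

lemma line_form:
  fixes W :: "complex^'p^('p::finite + 'q::finite)"
  assumes inv: "invertible (upper_block W)"
  shows "\<exists>a b \<beta>. \<forall>c. 1 + c * \<beta> \<noteq> 0 \<longrightarrow>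
     invertible (upper_block (W + dirE k l c)) \<and> Phi (W + dirE k l c) $ i $ j = a + b * (c / (1 + c * \<beta>))"
proof (cases k)
  case (Inl k')
  define A where "A = upper_block W"
  define L where "L = lower_block W"
  define B where "B = matrix_inv A"
  define \<beta> where "\<beta> = B $ l $ k'"
  show ?thesis
  proof (intro exI allI impI conjI)
    fix c assume nz: "1 + c * \<beta> \<noteq> 0"
    define X where "X = matrix_inv A - (\<chi> i j. (c / (1 + c * matrix_inv A $ l $ k')) * matrix_inv A $ i $ k' * matrix_inv A $ l $ j)"
    have AX: "(A + Em k' l c) ** X = mat 1"
      unfolding X_def Em_def by (rule sm) (use inv nz in \<open>simp_all add: A_def B_def \<beta>_def\<close>)
    show "invertible (upper_block (W + dirE k l c))"
      unfolding Inl blocks_Inl A_def[symmetric] using AX invertible_right_inverse by blast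
    have "Phi (W + dirE k l c) = L ** X"
      unfolding Phi_def Inl blocks_Inl A_def[symmetric] L_def[symmetric] using matrix_inv_eq[OF AX] by simp
    then have "Phi (W + dirE k l c) $ i $ j = (\<Sum>m\<in>UNIV. L $ i $ m * (B $ m $ j - (c / (1 + c * \<beta>)) * B $ m $ k' * B $ l $ j))"
      by (simp add: X_def matrix_matrix_mult_def B_def \<beta>_def)
    also have "\<dots> = (\<Sum>m\<in>UNIV. L $ i $ m * B $ m $ j) + (- (\<Sum>m\<in>UNIV. L $ i $ m * B $ m $ k') * B $ l $ j) * (c / (1 + c * \<beta>))"
      by (simp add: algebra_simps sum_subtractf sum_distrib_left sum_distrib_right)
    finally show "Phi (W + dirE k l c) $ i $ j = (\<Sum>m\<in>UNIV. L $ i $ m * B $ m $ j) + (- (\<Sum>m\<in>UNIV. L $ i $ m * B $ m $ k') * B $ l $ j) * (c / (1 + c * \<beta>))" .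
  qed
next
  case (Inr k')
  define A where "A = upper_block W"
  define L where "L = lower_block W"
  define B where "B = matrix_inv A"
  show ?thesis
  proof (intro exI allI impI conjI)
    fix c :: complex
    show "invertible (upper_block (W + dirE k l c))"
      unfolding Inr blocks_Inr using inv .
    have "Phi (W + dirE k l c) = (L + Em k' l c) ** B"
      unfolding Phi_def Inr blocks_Inr A_def[symmetric] L_def[symmetric] B_def ..
    then have "Phi (W + dirE k l c) $ i $ j = (\<Sum>m\<in>UNIV. (L $ i $ m + (if i = k' \<and> m = l then c else 0)) * B $ m $ j)"
      by (simp add: matrix_matrix_mult_def Em_def)
    also have "\<dots> = (\<Sum>m\<in>UNIV. L $ i $ m * B $ m $ j) + (\<Sum>m\<in>UNIV. (if i = k' \<and> m = l then c * B $ m $ j else 0))"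
      by (simp add: distrib_right sum.distrib, rule sum.cong, auto)
    also have "\<dots> = (\<Sum>m\<in>UNIV. L $ i $ m * B $ m $ j) + (if i = k' then B $ l $ j else 0) * (c / (1 + c * 0))"
      by (cases "i = k'") simp_all
    finally show "Phi (W + dirE k l c) $ i $ j = (\<Sum>m\<in>UNIV. L $ i $ m * B $ m $ j) + (if i = k' then B $ l $ j else 0) * (c / (1 + c * 0))" .
  qed
qed

lemma deriv_form:
  fixes h :: "complex \<Rightarrow> complex"
  assumes "\<forall>c. 1 + c * \<beta> \<noteq> 0 \<longrightarrow> h c = a + b * (c / (1 + c * \<beta>))"
  shows "(h has_field_derivative b) (at 0)"
proof -
  have "((\<lambda>c. a + b * (c / (1 + c * \<beta>))) has_field_derivative b) (at 0)"
    by (auto intro!: derivative_eq_intros)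
  moreover have "open {c::complex. 1 + c * \<beta> \<noteq> 0}"
    by (rule open_Collect_neq) (auto intro!: continuous_intros)
  ultimately show ?thesis
    by (rule has_field_derivative_transform_within_open) (use assms in auto)
qed

lemma pd_lines:
  fixes h :: "complex \<Rightarrow> complex"
  assumes "(h has_field_derivative b) (at 0)"
  shows "vector_derivative (\<lambda>t::real. h (complex_of_real t)) (at 0) = b"
    "vector_derivative (\<lambda>t::real. h (\<i> * complex_of_real t)) (at 0) = \<i> * b"
proof -
  have d1: "(complex_of_real has_vector_derivative 1) (at 0)"
    unfolding has_vector_derivative_def
    by (rule has_derivative_eq_rhs[OF bounded_linear_imp_has_derivative[OF bounded_linear_of_real]])
       (simp add: fun_eq_iff scaleR_conv_of_real)
  show "vector_derivative (\<lambda>t::real. h (complex_of_real t)) (at 0) = b"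
    using field_vector_diff_chain_at[OF d1, of h b] assms by (simp add: o_def vector_derivative_at)
  have d2: "((\<lambda>t::real. \<i> * complex_of_real t) has_vector_derivative \<i>) (at 0)"
    using has_vector_derivative_mult_right[OF d1, of \<i>] by simp
  show "vector_derivative (\<lambda>t::real. h (\<i> * complex_of_real t)) (at 0) = \<i> * b"
    using field_vector_diff_chain_at[OF d2, of h b] assms by (simp add: o_def vector_derivative_at)
qed

lemma wzbar_Phi:
  fixes W :: "complex^'p^('p::finite + 'q::finite)"
  assumes "invertible (upper_block W)"
  shows "wzbar (\<lambda>Z. Phi Z $ i $ j) k l W = 0"
proof -
  obtain a b \<beta> where H: "\<forall>c. 1 + c * \<beta> \<noteq> 0 \<longrightarrow>
     invertible (upper_block (W + dirE k l c)) \<and> Phi (W + dirE k l c) $ i $ j = a + b * (c / (1 + c * \<beta>))"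
    using line_form[OF assms, of k l i j] by blast
  define h where "h c = Phi (W + dirE k l c) $ i $ j" for c
  have "(h has_field_derivative b) (at 0)"
    by (rule deriv_form[of \<beta> _ a b]) (use H in \<open>simp add: h_def\<close>)
  from pd_lines[OF this] show ?thesis
    unfolding wzbar_def pd_re_def pd_im_def h_def by (simp add: algebra_simps)
qed

lemma vanish_pd:
  fixes Z :: "complex^'p^('p::finite + 'q::finite)"
  assumes g0: "\<forall>W. invertible (upper_block W) \<longrightarrow> g W = 0"
    and inv: "invertible (upper_block Z)"
  shows "pd_re g k l Z = 0" "pd_im g k l Z = 0"
proof -
  obtain a b \<beta> where H: "\<forall>c. 1 + c * \<beta> \<noteq> 0 \<longrightarrow>
     invertible (upper_block (Z + dirE k l c)) \<and> Phi (Z + dirE k l c) $ (undefined::'q) $ (undefined::'p) = a + b * (c / (1 + c * \<beta>))"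
    using line_form[OF inv, of k l] by blast
  have z: "((\<lambda>t::real. 0::complex) has_vector_derivative 0) (at 0)" by simp
  have o1: "open {t::real. 1 + complex_of_real t * \<beta> \<noteq> 0}"
    by (rule open_Collect_neq) (auto intro!: continuous_intros)
  have o2: "open {t::real. 1 + (\<i> * complex_of_real t) * \<beta> \<noteq> 0}"
    by (rule open_Collect_neq) (auto intro!: continuous_intros)
  have "((\<lambda>t::real. g (Z + dirE k l (complex_of_real t))) has_vector_derivative 0) (at 0)"
    by (rule has_vector_derivative_transform_within_open[OF z o1]) (use H g0 in auto)
  then show "pd_re g k l Z = 0" unfolding pd_re_def by (rule vector_derivative_at)
  have "((\<lambda>t::real. g (Z + dirE k l (\<i> * complex_of_real t))) has_vector_derivative 0) (at 0)"
    by (rule has_vector_derivative_transform_within_open[OF z o2]) (use H g0 in auto)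
  then show "pd_im g k l Z = 0" unfolding pd_im_def by (rule vector_derivative_at)
qed

lemma tension_Phi:
  fixes Z :: "complex^'p^('p::finite + 'q::finite)"
  assumes "invertible (upper_block Z)"
  shows "tension (\<lambda>Z. Phi Z $ i $ j) Z = 0"
proof -
  have "wz (wzbar (\<lambda>Z. Phi Z $ i $ j) k l) k l Z = 0" for k l
  proof -
    have g0: "\<forall>W. invertible (upper_block W) \<longrightarrow> wzbar (\<lambda>Z. Phi Z $ i $ j) k l W = 0"
      using wzbar_Phi by blast
    show ?thesis unfolding wz_def using vanish_pd[OF g0 assms] by simp
  qed
  then show ?thesis unfolding tension_def by simp
qed

lemma conf_Phi:
  fixes Z :: "complex^'p^('p::finite + 'q::finite)"
  assumes "invertible (upper_block Z)"
  shows "conformality (\<lambda>Z. Phi Z $ i $ j) (\<lambda>Z. Phi Z $ i' $ j') Z = 0"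
  unfolding conformality_def using wzbar_Phi[OF assms] by simp

lemma Upq_inv:
  fixes Z :: "complex^'p^('p::finite + 'q::finite)"
  assumes "Z \<in> U_pq"
  shows "invertible (upper_block Z)"
proof -
  define A where "A = upper_block Z"
  define L where "L = lower_block Z"
  have nd: "neg_definite (- (cadj A ** A) + cadj L ** L)"
    using assms unfolding U_pq_def A_def L_def by simp
  have "inj ((*v) A)"
  proof (rule ccontr)
    assume "\<not> inj ((*v) A)"
    then obtain x y where xy: "x \<noteq> y" "A *v x = A *v y" unfolding inj_def by blast
    define v where "v = x - y"
    have v0: "v \<noteq> 0" and Av: "A *v v = 0"
      using xy by (auto simp: v_def matrix_vector_mult_diff_distrib)
    define w where "w = L *v v"
    have Mv: "(- (cadj A ** A) + cadj L ** L) *v v = cadj L *v w"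
    proof -
      have "(- (cadj A ** A) + cadj L ** L) = cadj L ** L - cadj A ** A" by simp
      then have "(- (cadj A ** A) + cadj L ** L) *v v = (cadj L ** L) *v v - (cadj A ** A) *v v"
        by (simp add: matrix_vector_mult_diff_rdistrib)
      also have "\<dots> = cadj L *v w"
        by (simp add: matrix_vector_mul_assoc[symmetric] Av w_def)
      finally show ?thesis .
    qed
    have "(\<Sum>i\<in>UNIV. cnj (v $ i) * (cadj L *v w) $ i) = (\<Sum>i\<in>UNIV. \<Sum>m\<in>UNIV. cnj (v $ i) * cnj (L $ m $ i) * w $ m)"
      by (simp add: matrix_vector_mult_def cadj_def sum_distrib_left mult_ac)
    also have "\<dots> = (\<Sum>m\<in>UNIV. \<Sum>i\<in>UNIV. cnj (v $ i) * cnj (L $ m $ i) * w $ m)"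
      by (rule sum.swap)
    also have "\<dots> = (\<Sum>m\<in>UNIV. cnj (w $ m) * w $ m)"
    proof -
      have cw: "\<And>m. cnj (w $ m) = (\<Sum>i\<in>UNIV. cnj (v $ i) * cnj (L $ m $ i))"
        by (simp add: w_def matrix_vector_mult_def mult_ac)
      show ?thesis by (simp only: cw sum_distrib_right)
    qed
    finally have eq: "(\<Sum>i\<in>UNIV. cnj (v $ i) * ((- (cadj A ** A) + cadj L ** L) *v v) $ i) = (\<Sum>m\<in>UNIV. cnj (w $ m) * w $ m)"
      using Mv by simp
    have "Re (\<Sum>m\<in>UNIV. cnj (w $ m) * w $ m) \<ge> 0"
      by (simp add: Re_sum sum_nonneg)
    moreover have "Re (\<Sum>i\<in>UNIV. cnj (v $ i) * ((- (cadj A ** A) + cadj L ** L) *v v) $ i) < 0"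
      using nd v0 unfolding neg_definite_def by blast
    ultimately show False unfolding eq by linarith
  qed
  then have "det A \<noteq> 0"
    using det_nz_iff_inj_gen[OF matrix_vector_mul_linear_gen, of A] by (simp add: matrix_of_matrix_vector_mul)
  then show ?thesis unfolding A_def by (simp add: invertible_det_nz)
qed

lemma blocks_mult:
  fixes Z :: "complex^'p^('p::finite + 'q::finite)" and g :: "complex^'p^'p"
  shows "upper_block (Z ** g) = upper_block Z ** g" "lower_block (Z ** g) = lower_block Z ** g"
  by (auto simp: vec_eq_iff upper_block_def lower_block_def matrix_matrix_mult_def)

lemma Phi_inv:
  fixes Z :: "complex^'p^('p::finite + 'q::finite)" and g :: "complex^'p^'p"
  assumes "invertible (upper_block Z)" "invertible g"
  shows "Phi (Z ** g) = Phi Z"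
proof -
  define A where "A = upper_block Z"
  have "(A ** g) ** (matrix_inv g ** matrix_inv A) = mat 1"
    using inv_mat_inv[OF assms(2)] inv_mat_inv[OF assms(1)[folded A_def]]
    by (metis matrix_mul_assoc matrix_mul_rid)
  then have "matrix_inv (A ** g) = matrix_inv g ** matrix_inv A" by (rule matrix_inv_eq)
  then show ?thesis
    unfolding Phi_def blocks_mult A_def[symmetric]
    using inv_mat_inv[OF assms(2)] by (metis matrix_mul_assoc matrix_mul_lid matrix_mul_rid)
qed


theorem proposition4p1:
  fixes \<Omega> :: "(complex^'p^('p::finite + 'q::finite) \<Rightarrow> complex) set"
  defines "\<Omega> \<equiv> {(\<lambda>Z. Phi Z $ i $ j) | (i::'q::finite) (j::'p). True}"
  shows "orthogonal_harmonic_family (U_pq :: (complex^'p^('p::finite + 'q::finite)) set) \<Omega>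
         \<and> (\<forall>\<phi>\<in>\<Omega>. \<forall>Z\<in>(U_pq :: (complex^'p^('p::finite + 'q::finite)) set). \<forall>g :: complex^'p^'p.
               invertible g \<longrightarrow> \<phi> (Z ** g) = \<phi> Z)"
  unfolding orthogonal_harmonic_family_def \<Omega>_def
  using tension_Phi conf_Phi Phi_inv Upq_inv by fastforce

end
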